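(* Let $r\geq 1$ and let $\mathbf a=(a_1,\ldots,a_r)$ be positive integers. Write the partial fraction decomposition $$\frac{1}{(1-z^{a_1})\cdots(1-z^{a_r})}=\sum_{\lambda}\sum_{\ell=1}^{m(\lambda)}\frac{c_{\lambda,\ell}}{(\lambda-z)^{\ell}},$$ where $\lambda$ ranges over the distinct roots of the denominator and $m(\lambda)$ is the multiplicity of $\lambda$ as a root. Then for $1\leq m\leq r$, $c_m:=c_{1,m}$ satisfies $$c_m = \frac{(-1)^{r-m}(m-1)!}{a_1\cdots a_r} \sum_{\ell=m}^r \frac{\left\{ {\ell \atop m}\right\}} {(\ell-1)!} \sum_{i_1+\cdots+i_r=r-\ell}\frac{B_{i_1}\cdots B_{i_r}}{i_1!\cdots i_r!}a_1^{i_1} \cdots a_r^{i_r},$$ where the inner sum runs over tuples of nonnegative integers $(i_1,\ldots,i_r)$.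
   Context: $B_\ell$ are the Bernoulli numbers defined by $\frac{t}{e^t-1}=\sum_{\ell\geq0}B_\ell\frac{t^\ell}{\ell!}$. $\left\{ {\ell \atop m}\right\}$ denotes the Stirling number of the second kind. *)

theory Defs
  imports "HOL-Analysis.Analysis" "HOL-Combinatorics.Stirling"
    "HOL-Computational_Algebra.Formal_Power_Series" "HOL-Computational_Algebra.Polynomial"
begin

definition bernoulli_num :: "nat \<Rightarrow> real" where
  "bernoulli_num l = fact l * fps_nth (fps_X / (fps_exp 1 - 1)) l"

text \<open>The denominator (1 - z^a_1) ... (1 - z^a_r) as a complex polynomial
  (indices 0..r-1).\<close>
definition denom_poly :: "nat \<Rightarrow> (nat \<Rightarrow> nat) \<Rightarrow> complex poly" where
  "denom_poly r a = (\<Prod>k<r. 1 - monom 1 (a k))"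

end

theory Submission
  imports Defs
begin

unbundle no vec_syntax
notation fps_nth (infixl "$" 75)


lemma resid_aux:
  fixes U :: "'a::field_char_0 fps"
  assumes U0: "U $ 0 \<noteq> 0"
  shows "(inverse U ^ Suc n * fps_deriv (fps_X * U)) $ n = (if n = 0 then 1 else 0)"
proof -
  define V where "V = inverse U"
  have VU: "V * U = 1" using U0 by (simp add: V_def inverse_mult_eq_1)
  have dV: "fps_deriv V = - fps_deriv U * V^2" unfolding V_def
    using fps_inverse_deriv[OF U0] by simp
  have e1: "V ^ Suc n * fps_deriv (fps_X * U) = V ^ n + fps_X * (V ^ Suc n * fps_deriv U)"
  proof -
    have "V ^ Suc n * fps_deriv (fps_X * U) = V^n * (V * U) + fps_X * (V ^ Suc n * fps_deriv U)"
      by (simp add: fps_deriv_mult algebra_simps)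
    then show ?thesis using VU by simp
  qed
  show ?thesis
  proof (cases n)
    case 0
    have "(V * fps_deriv (fps_X * U)) $ 0 = (V*U) $ 0"
      by (simp add: fps_deriv_mult fps_mult_nth)
    then show ?thesis using 0 VU V_def U0 by simp
  next
    case (Suc k)
    have dVn: "fps_deriv (V ^ n) = - (fps_const (of_nat n) * (V ^ Suc n * fps_deriv U))"
    proof -
      have "fps_deriv (V ^ n) = fps_const (of_nat n) * fps_deriv V * V ^ k"
        by (subst fps_deriv_power) (simp add: Suc)
      also have "\<dots> = - (fps_const (of_nat n) * (V ^ Suc n * fps_deriv U))"
        using Suc by (simp add: dV power2_eq_square algebra_simps del: fps_const_neg)
      finally show ?thesis .
    qed
    have "(fps_X * (V ^ Suc n * fps_deriv U)) $ n = (V ^ Suc n * fps_deriv U) $ k"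
      using Suc by simp 
    also have "\<dots> = - (fps_deriv (V ^ n)) $ k / of_nat n"
    proof -
      have nz: "(of_nat n :: 'a) \<noteq> 0" using Suc of_nat_neq_0 by metis
      show ?thesis unfolding dVn fps_neg_nth fps_mult_left_const_nth using nz by (simp add: field_simps del: fps_mult_left_const_nth)
    qed
    also have "\<dots> = - (V ^ n) $ n"
    proof -
      have nz: "(of_nat n :: 'a) \<noteq> 0" using Suc of_nat_neq_0 by metis
      have kn: "k + 1 = n" using Suc by simp
      have nz': "(1 + of_nat k :: 'a) \<noteq> 0" by (metis of_nat_Suc of_nat_neq_0)
      have kn': "Suc k = n" using Suc by simp
      have "(fps_deriv (V ^ n)) $ k = of_nat n * (V^n) $ n"
        unfolding fps_deriv_nth kn kn' ..
      then show ?thesis using nz by simp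
    qed
    finally show ?thesis using e1 Suc V_def by simp
  qed
qed

lemma resid:
  fixes U G :: "'a::field_char_0 fps"
  assumes U0: "U $ 0 \<noteq> 0"
  shows "G $ j = ((G oo (fps_X * U)) * fps_deriv (fps_X * U) * inverse U ^ Suc j) $ j"
proof -
  define W where "W = fps_X * U"
  define F where "F = fps_deriv W * inverse U ^ Suc j"
  define Gt where "Gt = (\<Sum>i\<le>j. fps_const (G $ i) * fps_X ^ i)"
  have W0: "W $ 0 = 0" by (simp add: W_def)
  have Gtn: "Gt $ i = (if i \<le> j then G $ i else 0)" for i
  proof -
    have "Gt $ i = (\<Sum>k\<le>j. if i = k then G $ k else 0)"
      unfolding Gt_def fps_sum_nth by (intro sum.cong) auto
    then show ?thesis by simp
  qed
  have c1: "(G oo W) $ p = (Gt oo W) $ p" if "p \<le> j" for p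
    unfolding fps_compose_nth using that by (intro sum.cong) (auto simp: Gtn)
  have "((G oo W) * F) $ j = ((Gt oo W) * F) $ j"
    unfolding fps_mult_nth by (intro sum.cong) (auto simp: c1)
  also have "Gt oo W = (\<Sum>i\<le>j. fps_const (G $ i) * W ^ i)"
    unfolding Gt_def fps_compose_sum_distrib
    by (intro sum.cong) (simp_all add: fps_compose_mult_distrib[OF W0] fps_compose_power[OF W0, symmetric] W0)
  also have "((\<Sum>i\<le>j. fps_const (G $ i) * W ^ i) * F) $ j = (\<Sum>i\<le>j. G $ i * (W ^ i * F) $ j)"
    by (simp add: sum_distrib_right fps_sum_nth mult.assoc)
  also have "\<dots> = (\<Sum>i\<le>j. (if i = j then G $ i else 0))"
  proof (intro sum.cong refl)
    fix i assume i: "i \<in> {..j}"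
    define V where "V = inverse U"
    have VU: "U * V = 1" using U0 by (simp add: V_def inverse_mult_eq_1')
    have "V ^ Suc j = V ^ i * V ^ Suc (j - i)" using i by (simp add: power_add[symmetric])
    then have "U ^ i * V ^ Suc j = (U * V) ^ i * V ^ Suc (j - i)"
      by (simp only: power_mult_distrib mult.assoc)
    then have "U ^ i * V ^ Suc j = V ^ Suc (j - i)" by (simp only: VU power_one mult_1_left)
    note key = this
    have "W ^ i * F = fps_X ^ i * ((U ^ i * V ^ Suc j) * fps_deriv (fps_X * U))"
      unfolding W_def F_def V_def power_mult_distrib by (simp only: ac_simps)
    then have "W ^ i * F = fps_X ^ i * (V ^ Suc (j - i) * fps_deriv (fps_X * U))"
      by (simp only: key)
    then have "(W ^ i * F) $ j = (V ^ Suc (j - i) * fps_deriv (fps_X * U)) $ (j - i)"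
      using i by (simp add: fps_X_power_mult_nth)
    also have "\<dots> = (if i = j then 1 else 0)"
      unfolding V_def resid_aux[OF U0] using i by auto
    finally show "G $ i * (W ^ i * F) $ j = (if i = j then G $ i else 0)" by simp
  qed
  also have "\<dots> = G $ j" by simp
  finally show ?thesis by (simp add: W_def F_def mult.assoc)
qed

lemma Wpow_nth:
  fixes W :: "'a::field_char_0 fps"
  defines "W \<equiv> 1 - fps_exp (-1)"
  shows "(W ^ m) $ n = (-1)^(n+m) * fact m * of_nat (Stirling n m) / fact n"
proof (induction m arbitrary: n)
  case 0
  then show ?case by (cases n) auto
next
  case (Suc m)
  have dW: "fps_deriv W = 1 - W" by (simp add: W_def fps_const_neg[symmetric] del: fps_const_neg)
  have D: "fps_deriv (W ^ Suc m) = fps_const (of_nat (Suc m)) * (W ^ m - W ^ Suc m)"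
    by (subst fps_deriv_power) (simp add: dW algebra_simps)
  show ?case
  proof (induction n)
    case 0
    then show ?case by (simp add: W_def)
  next
    case (Suc n)
    have "(fps_deriv (W ^ Suc m)) $ n = of_nat (Suc m) * ((W ^ m) $ n - (W ^ Suc m) $ n)"
      unfolding D by simp
    then have e: "of_nat (Suc n) * (W ^ Suc m) $ Suc n = of_nat (Suc m) * ((W ^ m) $ n - (W ^ Suc m) $ n)"
      unfolding fps_deriv_nth by simp
    have nz: "(of_nat (Suc n) :: 'a) \<noteq> 0" by (metis of_nat_neq_0)
    have "(W ^ Suc m) $ Suc n = of_nat (Suc m) * ((W ^ m) $ n - (W ^ Suc m) $ n) / of_nat (Suc n)"
      using e nz by (simp add: field_simps)
    also have "\<dots> = of_nat (Suc m) * ((-1)^(n+m) * fact m * of_nat (Stirling n m) / fact n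
        - (-1)^(n+Suc m) * fact (Suc m) * of_nat (Stirling n (Suc m)) / fact n) / of_nat (Suc n)"
      using Suc.IH Suc.prems by (simp only: Suc.IH \<open>\<And>n. (W ^ m) $ n = _\<close>)
    also have "\<dots> = (-1)^(Suc n+Suc m) * fact (Suc m) * of_nat (Stirling (Suc n) (Suc m)) / fact (Suc n)"
      by (simp add: field_simps)
    finally show ?case .
  qed
qed

lemma bern_fps: "fps_X / (fps_exp 1 - 1) * (fps_exp (1::real) - 1) = fps_X"
proof -
  define E :: "real fps" where "E = fps_exp 1 - 1"
  define S where "S = fps_shift 1 E"
  have E0: "E $ 0 = 0" by (simp add: E_def)
  have ES: "E = fps_X * S" unfolding S_def
    by (rule fps_ext) (simp add: E0)
  have S0: "S $ 0 \<noteq> 0" by (simp add: S_def E_def)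
  have "E * inverse S = fps_X" using S0 by (simp add: ES mult.assoc inverse_mult_eq_1')
  then have "E dvd fps_X" by (metis dvd_triv_left)
  then show ?thesis unfolding E_def[symmetric] by (rule dvd_div_mult_self)
qed

lemma bern_nth: "bernoulli_num n / fact n = (fps_X / (fps_exp 1 - 1)) $ n"
  by (simp add: bernoulli_num_def)

definition Pb :: "nat \<Rightarrow> complex fps" where
  "Pb a = Abs_fps (\<lambda>n. complex_of_real (bernoulli_num n) / fact n * (- of_nat a) ^ n)"

lemma Pb_prop: "Pb a * (1 - fps_exp (- of_nat a)) = fps_const (of_nat a) * fps_X"
proof (rule fps_ext)
  fix n
  define B :: "real fps" where "B = fps_X / (fps_exp 1 - 1)"
  define E :: "real fps" where "E = fps_exp 1 - 1"
  have BE: "B * E = fps_X" unfolding B_def E_def by (rule bern_fps)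
  have Pn: "Pb a $ i = complex_of_real (B $ i) * (- of_nat a) ^ i" for i
    by (simp add: Pb_def B_def bern_nth[symmetric])
  have En: "(1 - fps_exp (- of_nat a) :: complex fps) $ k = - complex_of_real (E $ k) * (- of_nat a) ^ k" for k
    by (cases "k = 0") (simp_all add: E_def)
  have "(Pb a * (1 - fps_exp (- of_nat a))) $ n
      = (\<Sum>i=0..n. - ((- of_nat a) ^ n) * complex_of_real (B $ i * E $ (n - i)))"
    unfolding fps_mult_nth
  proof (intro sum.cong refl)
    fix i assume "i \<in> {0..n}"
    then have "(- of_nat a :: complex) ^ i * (- of_nat a) ^ (n - i) = (- of_nat a) ^ n"
      by (simp add: power_add[symmetric])
    then show "Pb a $ i * (1 - fps_exp (- of_nat a)) $ (n - i) =
      - ((- of_nat a) ^ n) * complex_of_real (B $ i * E $ (n - i))"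
      unfolding Pn En by (simp add: algebra_simps)
  qed
  also have "\<dots> = - ((- of_nat a) ^ n) * complex_of_real ((B * E) $ n)"
    by (simp add: fps_mult_nth sum_distrib_left)
  also have "\<dots> = (fps_const (of_nat a) * fps_X) $ n"
    unfolding BE by (cases "n = 1") auto
  finally show "(Pb a * (1 - fps_exp (- of_nat a))) $ n = (fps_const (of_nat a) * fps_X) $ n" .
qed



lemma prod_nth_gen:
  fixes F :: "nat \<Rightarrow> 'a::comm_ring_1 fps"
  assumes "n \<le> N"
  shows "(\<Prod>k<r. F k) $ n = (\<Sum>i\<in>{..<r} \<rightarrow>\<^sub>E {..N}. if (\<Sum>k<r. i k) = n then \<Prod>k<r. (F k) $ (i k) else 0)"
  using assms
proof (induction r arbitrary: n)
  case 0
  then show ?case by simp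
next
  case (Suc r)
  let ?P = "{..<r} \<rightarrow>\<^sub>E {..N}"
  have ins: "{..<Suc r} = insert r {..<r}" by auto
  have "(\<Sum>i\<in>{..<Suc r} \<rightarrow>\<^sub>E {..N}. if (\<Sum>k<Suc r. i k) = n then \<Prod>k<Suc r. (F k) $ (i k) else 0)
      = (\<Sum>(y,g)\<in>{..N} \<times> ?P. if (\<Sum>k<Suc r. (g(r:=y)) k) = n then \<Prod>k<Suc r. (F k) $ ((g(r:=y)) k) else 0)"
    unfolding ins PiE_insert_eq
    by (subst sum.reindex[OF inj_combinator]) (auto simp: split_def)
  also have "\<dots> = (\<Sum>y\<le>N. \<Sum>g\<in>?P. if (\<Sum>k<r. g k) + y = n then (\<Prod>k<r. (F k) $ (g k)) * (F r) $ y else 0)"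
    unfolding sum.cartesian_product[symmetric]
  proof (intro sum.cong refl)
    fix y g assume "g \<in> ?P"
    have a: "(\<Sum>k<Suc r. (g(r:=y)) k) = (\<Sum>k<r. g k) + y" by simp
    have b: "(\<Prod>k<Suc r. (F k) $ ((g(r:=y)) k)) = (\<Prod>k<r. (F k) $ (g k)) * (F r) $ y" by simp
    show "(if (\<Sum>k<Suc r. (g(r:=y)) k) = n then \<Prod>k<Suc r. (F k) $ ((g(r:=y)) k) else 0) =
      (if (\<Sum>k<r. g k) + y = n then (\<Prod>k<r. (F k) $ (g k)) * (F r) $ y else 0)"
      unfolding a b ..
  qed
  also have "\<dots> = (\<Sum>y\<le>N. if y \<le> n then (\<Prod>k<r. F k) $ (n - y) * (F r) $ y else 0)"
  proof (intro sum.cong refl)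
    fix y assume y: "y \<in> {..N}"
    show "(\<Sum>g\<in>?P. if (\<Sum>k<r. g k) + y = n then (\<Prod>k<r. (F k) $ (g k)) * (F r) $ y else 0)
      = (if y \<le> n then (\<Prod>k<r. F k) $ (n - y) * (F r) $ y else 0)"
    proof (cases "y \<le> n")
      case True
      have "(\<Sum>g\<in>?P. if (\<Sum>k<r. g k) + y = n then (\<Prod>k<r. (F k) $ (g k)) * (F r) $ y else 0)
        = (\<Sum>g\<in>?P. (if (\<Sum>k<r. g k) = n - y then \<Prod>k<r. (F k) $ (g k) else 0) * (F r) $ y)"
      proof (rule sum.cong[OF refl])
        fix g
        have "((\<Sum>k<r. g k) + y = n) = ((\<Sum>k<r. g k) = n - y)" using True by linarith
        then show "(if (\<Sum>k<r. g k) + y = n then (\<Prod>k<r. (F k) $ (g k)) * (F r) $ y else 0)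
          = (if (\<Sum>k<r. g k) = n - y then \<Prod>k<r. (F k) $ (g k) else 0) * (F r) $ y"
          by (simp only: if_distrib[of "\<lambda>x. x * F r $ y"] mult_zero_left)
      qed
      also have "\<dots> = (\<Sum>g\<in>?P. (if (\<Sum>k<r. g k) = n - y then \<Prod>k<r. (F k) $ (g k) else 0)) * (F r) $ y"
        by (simp only: sum_distrib_right)
      also have "\<dots> = (\<Prod>k<r. F k) $ (n - y) * (F r) $ y"
      proof -
        from Suc.prems have "n - y \<le> N" by simp
        note ih = Suc.IH[OF this]
        show ?thesis by (simp only: ih)
      qed
      finally show ?thesis using True by simp
    next
      case False
      then show ?thesis by (auto intro!: sum.neutral)
    qed
  qed
  also have "\<dots> = (\<Sum>y\<le>n. (\<Prod>k<r. F k) $ (n - y) * (F r) $ y)"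
  proof -
    have "{y \<in> {..N}. y \<le> n} = {..n}" using Suc.prems by auto
    then show ?thesis by (simp add: sum.inter_filter[symmetric])
  qed
  also have "\<dots> = (F r * (\<Prod>k<r. F k)) $ n"
    unfolding fps_mult_nth atMost_atLeast0 by (simp add: mult.commute)
  also have "\<dots> = (\<Prod>k<Suc r. F k) $ n" by (simp add: mult.commute)
  finally show ?case ..
qed

lemma prod_nth_PiE:
  fixes F :: "nat \<Rightarrow> 'a::comm_ring_1 fps"
  shows "(\<Prod>k<r. F k) $ n = (\<Sum>i\<in>{i \<in> {..<r} \<rightarrow>\<^sub>E {..n}. (\<Sum>k<r. i k) = n}. \<Prod>k<r. (F k) $ (i k))"
  by (subst sum.inter_filter) (auto simp: prod_nth_gen[of n n] finite_PiE)



definition epoly :: "nat \<Rightarrow> (nat \<Rightarrow> nat) \<Rightarrow> complex poly" where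
  "epoly r a = (\<Prod>k<r. \<Sum>s<a k. monom 1 s)"

lemma one_minus_monom: "1 - monom (1::complex) n = [:1,-1:] * (\<Sum>s<n. monom 1 s)"
proof -
  have "poly (1 - monom (1::complex) n) z = poly ([:1,-1:] * (\<Sum>s<n. monom 1 s)) z" for z
    by (simp add: poly_monom poly_sum one_diff_power_eq[of z n] left_diff_distrib)
  then show ?thesis by (simp add: poly_eq_poly_eq_iff[symmetric] fun_eq_iff)
qed

lemma denom_factor: "denom_poly r a = [:1,-1:]^r * epoly r a"
  unfolding denom_poly_def epoly_def one_minus_monom prod.distrib by simp

lemma epoly1: "poly (epoly r a) 1 = (\<Prod>k<r. of_nat (a k))"
  by (simp add: epoly_def poly_prod poly_sum poly_monom)

lemma partA:
  fixes r :: nat and a :: "nat \<Rightarrow> nat" and c :: "complex \<Rightarrow> nat \<Rightarrow> complex"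
  assumes r: "r \<ge> 1"
    and apos: "\<forall>k<r. a k > 0"
    and pfd: "\<forall>z. poly (denom_poly r a) z \<noteq> 0 \<longrightarrow>
       1 / poly (denom_poly r a) z =
       (\<Sum>x\<in>{w. poly (denom_poly r a) w = 0}.
          \<Sum>l=1..order x (denom_poly r a). c x l / (x - z) ^ l)"
  shows "\<exists>R. 1 = (\<Sum>l=1..r. smult (c 1 l) ([:1,-1:]^(r-l) * epoly r a)) + [:-1,1:]^r * R"
proof -
  define D where "D = denom_poly r a"
  define e where "e = epoly r a"
  define S where "S = {w. poly D w = 0}"
  have De: "D = [:1,-1:]^r * e" unfolding D_def e_def by (rule denom_factor)
  have e1: "poly e 1 \<noteq> 0" unfolding e_def epoly1 using apos by auto
  have e0: "e \<noteq> 0" using e1 by auto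
  have D0: "D \<noteq> 0" using e0 by (simp add: De)
  have finS: "finite S" unfolding S_def using D0 by (rule poly_roots_finite)
  have neg: "[:x, -1:] = smult (-1) [:-x, 1:]" for x :: complex by simp
  have negp: "[:x, -1:] ^ l = smult ((-1)^l) ([:-x, 1:] ^ l)" for x :: complex and l
    unfolding neg smult_power ..
  have ordD1: "order 1 D = r"
  proof -
    have "D = smult ((-1)^r) ([:-1,1:]^r * e)" unfolding De negp by simp
    then have "order 1 D = order 1 ([:-1,1:]^r * e)" by (simp add: order_smult)
    also have "\<dots> = r" using e0 e1 by (subst order_mult) (auto simp: order_power_n_n order_0I)
    finally show ?thesis .
  qed
  have oneS: "1 \<in> S" unfolding S_def De using r by simp
  define q where "q x l = D div [:x,-1:]^l" for x l
  have dvdq: "[:x,-1:]^l dvd D" if "l \<le> order x D" for x l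
  proof -
    have "[:-x,1:]^l dvd D" using that by (simp add: order_divides)
    then show ?thesis unfolding negp by (rule smult_dvd) simp
  qed
  have Dq: "D = [:x,-1:]^l * q x l" if "l \<le> order x D" for x l
    using dvdq[OF that] unfolding q_def by simp
  have evq: "poly D z / (x - z) ^ l = poly (q x l) z" if "l \<le> order x D" "x \<noteq> z" for x z l
  proof -
    have "poly D z = (x - z) ^ l * poly (q x l) z"
      by (subst Dq[OF that(1)]) (simp add: poly_power)
    then show ?thesis using that(2) by simp
  qed
  define Q where "Q = (\<Sum>x\<in>S. \<Sum>l=1..order x D. smult (c x l) (q x l))"
  have Qz: "poly Q z = 1" if "z \<notin> S" for z
  proof -
    have Dz: "poly D z \<noteq> 0" using that by (simp add: S_def)
    have "poly Q z = (\<Sum>x\<in>S. \<Sum>l=1..order x D. c x l * (poly D z / (x - z) ^ l))"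
      unfolding Q_def poly_sum poly_smult
      by (intro sum.cong refl, subst evq) (use that in auto)
    also have "\<dots> = poly D z * (1 / poly D z)"
      using pfd Dz unfolding D_def[symmetric] S_def[symmetric]
      by (simp add: sum_distrib_left algebra_simps)
    also have "\<dots> = 1" using Dz by simp
    finally show ?thesis .
  qed
  have Q1: "Q = 1"
  proof (rule ccontr)
    assume "Q \<noteq> 1"
    then have "Q - 1 \<noteq> 0" by simp
    then have "finite {z. poly (Q - 1) z = 0}" by (rule poly_roots_finite)
    moreover have "- S \<subseteq> {z. poly (Q - 1) z = 0}" using Qz by auto
    ultimately have "finite (- S)" by (rule finite_subset[rotated])
    with finS have "finite (UNIV :: complex set)" by (metis Compl_partition finite_Un)
    then show False using infinite_UNIV_char_0 by blast
  qed
  have q1: "q 1 l = [:1,-1:]^(r-l) * e" if "l \<in> {1..r}" for l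
  proof -
    have l: "l \<le> order 1 D" using that ordD1 by simp
    have "[:1,-1:]^l * q 1 l = [:1,-1:]^l * ([:1,-1:]^(r-l) * e)"
      using Dq[OF l] that unfolding De by (simp add: mult.assoc[symmetric] power_add[symmetric])
    then show ?thesis by simp
  qed
  have dvdR: "[:-1,1:]^r dvd q x l" if "x \<in> S - {1}" "l \<in> {1..order x D}" for x l
  proof -
    have l: "l \<le> order x D" using that by simp
    have nz: "[:x,-1:]^l * q x l \<noteq> 0" using Dq[OF l] D0 by simp
    have "order 1 D = order 1 ([:x,-1:]^l) + order 1 (q x l)"
      using nz Dq[OF l] by (metis order_mult)
    moreover have "order 1 ([:x,-1:]^l) = 0"
      using that by (intro order_0I) (simp add: poly_power)
    ultimately have "order 1 (q x l) = r" using ordD1 by simp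
    then show ?thesis by (simp add: order_divides)
  qed
  have "[:-1,1:]^r dvd (\<Sum>x\<in>S - {1}. \<Sum>l=1..order x D. smult (c x l) (q x l))"
    by (intro dvd_sum dvd_smult dvdR) auto
  then obtain R where R: "(\<Sum>x\<in>S - {1}. \<Sum>l=1..order x D. smult (c x l) (q x l)) = [:-1,1:]^r * R"
    by (elim dvdE)
  have "1 = Q" using Q1 by simp
  also have "Q = (\<Sum>l=1..order 1 D. smult (c 1 l) (q 1 l)) + (\<Sum>x\<in>S - {1}. \<Sum>l=1..order x D. smult (c x l) (q x l))"
    unfolding Q_def using finS oneS by (simp add: sum.remove)
  also have "(\<Sum>l=1..order 1 D. smult (c 1 l) (q 1 l)) = (\<Sum>l=1..r. smult (c 1 l) ([:1,-1:]^(r-l) * e))"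
    unfolding ordD1 by (intro sum.cong refl) (simp add: q1)
  finally show ?thesis unfolding R e_def by blast
qed



definition phi :: "complex poly \<Rightarrow> complex fps" where
  "phi p = fps_of_poly (pcompose p [:1,-1:])"

definition Efps :: "nat \<Rightarrow> (nat \<Rightarrow> nat) \<Rightarrow> complex fps" where
  "Efps r a = (\<Prod>k<r. \<Sum>s<a k. (1 - fps_X) ^ s)"

lemma pcompose_power': "pcompose (p ^ n) q = (pcompose p q) ^ n"
  by (induction n) (simp_all add: pcompose_1 pcompose_mult)

lemma phi_monom: "phi (monom 1 s) = (1 - fps_X) ^ s"
proof -
  have "pcompose [:0, 1:] [:1, -1::complex:] = [:1,-1:]" by (simp add: pcompose_pCons)
  then show ?thesis
    unfolding phi_def monom_altdef by (simp add: pcompose_power' fps_of_poly_power fps_of_poly_pCons)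
qed

lemma phi_epoly: "phi (epoly r a) = Efps r a"
proof -
  have h: "fps_of_poly ([:1,-1:] ^ s) = (1 - fps_X :: complex fps) ^ s" for s
    by (simp add: fps_of_poly_power fps_of_poly_pCons fps_of_poly_const)
  have pm: "pcompose (monom 1 s) [:1,-1:] = [:1,-1::complex:] ^ s" for s
    unfolding monom_altdef by (simp add: pcompose_power' pcompose_pCons)
  show ?thesis
    unfolding epoly_def Efps_def phi_def pcompose_prod pcompose_sum fps_of_poly_prod fps_of_poly_sum pm h ..
qed

lemma phi_X: "phi ([:1,-1:] ^ n) = fps_X ^ n"
  unfolding phi_def pcompose_power' by (simp add: pcompose_pCons fps_of_poly_power)

lemma phi_X': "phi ([:-1,1:] ^ n) = (- fps_X) ^ n"
  unfolding phi_def pcompose_power' by (simp add: pcompose_pCons fps_of_poly_power fps_of_poly_pCons)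

lemma phi_add: "phi (p + q) = phi p + phi q"
  unfolding phi_def by (simp add: pcompose_add fps_of_poly_add)
lemma phi_mult: "phi (p * q) = phi p * phi q"
  unfolding phi_def by (simp add: pcompose_mult fps_of_poly_mult)
lemma phi_smult: "phi (smult c p) = fps_const c * phi p"
  unfolding phi_def by (simp add: pcompose_smult fps_of_poly_smult)
lemma phi_sum: "phi (sum f A) = (\<Sum>x\<in>A. phi (f x))"
  unfolding phi_def by (simp add: pcompose_sum fps_of_poly_sum)
lemma phi_1: "phi 1 = 1"
  unfolding phi_def by (simp add: pcompose_1)

lemma partA_fps:
  fixes r :: nat and a :: "nat \<Rightarrow> nat" and c :: "complex \<Rightarrow> nat \<Rightarrow> complex"
  assumes r: "r \<ge> 1"
    and apos: "\<forall>k<r. a k > 0"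
    and pfd: "\<forall>z. poly (denom_poly r a) z \<noteq> 0 \<longrightarrow>
       1 / poly (denom_poly r a) z =
       (\<Sum>x\<in>{w. poly (denom_poly r a) w = 0}.
          \<Sum>l=1..order x (denom_poly r a). c x l / (x - z) ^ l)"
  shows "\<exists>Rf. 1 = (\<Sum>l=1..r. fps_const (c 1 l) * (fps_X^(r-l) * Efps r a)) + fps_X^r * Rf"
proof -
  obtain R where R: "1 = (\<Sum>l=1..r. smult (c 1 l) ([:1,-1:]^(r-l) * epoly r a)) + [:-1,1:]^r * R"
    using partA[OF assms] by blast
  have "phi 1 = phi ((\<Sum>l=1..r. smult (c 1 l) ([:1,-1:]^(r-l) * epoly r a)) + [:-1,1:]^r * R)"
    by (rule arg_cong[where f=phi, OF R])
  then have "1 = (\<Sum>l=1..r. fps_const (c 1 l) * (fps_X^(r-l) * Efps r a)) + (- fps_X)^r * phi R"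
    unfolding phi_add phi_sum phi_smult phi_mult phi_X phi_X' phi_epoly phi_1 .
  also have "(- fps_X)^r * phi R = fps_X^r * ((-1)^r * phi R)"
    by (simp only: power_minus[of "fps_X :: complex fps"] mult_ac)
  finally show ?thesis by blast
qed

lemma Efps0: "Efps r a $ 0 = (\<Prod>k<r. of_nat (a k))"
  unfolding Efps_def by (induction r) (simp_all add: fps_sum_nth fps_nth_power_0)

lemma coeffG:
  fixes E Rf :: "complex fps"
  assumes id: "1 = (\<Sum>l=1..r. fps_const (c l) * (fps_X^(r-l) * E)) + fps_X^r * Rf"
    and E0: "E $ 0 \<noteq> 0" and m: "1 \<le> m" "m \<le> r"
  shows "inverse E $ (r - m) = c m"
proof -
  define G where "G = inverse E"
  have EG: "E * G = 1" unfolding G_def using E0 by (simp add: inverse_mult_eq_1')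
  have "G = 1 * G" by simp
  also have "\<dots> = (\<Sum>l=1..r. fps_const (c l) * fps_X^(r-l)) + fps_X^r * (Rf * G)"
  proof -
    have "(fps_X^r * Rf) * G = fps_X^r * (Rf * G)" by (simp only: mult.assoc)
    moreover have "(fps_const (c l) * (fps_X^(r-l) * E)) * G = fps_const (c l) * fps_X^(r-l)" for l
      by (simp only: mult.assoc EG mult_1_right)
    ultimately show ?thesis
      by (subst id) (simp only: distrib_right sum_distrib_right)
  qed
  finally have "G $ (r - m) = ((\<Sum>l=1..r. fps_const (c l) * fps_X^(r-l)) + fps_X^r * (Rf * G)) $ (r - m)"
    by simp
  also have "\<dots> = (\<Sum>l=1..r. if l = m then c l else 0)"
  proof -
    have "(fps_X^r * (Rf * G)) $ (r - m) = 0" using m by (simp add: fps_X_power_mult_nth)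
    moreover have "(fps_const (c l) * fps_X^(r-l)) $ (r - m) = (if l = m then c l else 0)" if "l \<in> {1..r}" for l
      using m that by auto
    ultimately show ?thesis unfolding fps_add_nth fps_sum_nth by simp
  qed
  also have "\<dots> = c m" using m by simp
  finally show ?thesis unfolding G_def .
qed



lemma UW_nth:
  fixes U :: "'a::field_char_0 fps"
  assumes m: "m \<ge> 1"
  shows "(U ^ (m - 1) * fps_deriv (fps_X * U)) $ n = of_nat (n + m) / of_nat m * (U ^ m) $ n"
proof -
  have Um: "U ^ m = U * U ^ (m - 1)" using m by (simp add: power_Suc[symmetric])
  have dUm: "fps_deriv (U ^ m) = fps_const (of_nat m) * (U ^ (m - 1) * fps_deriv U)"
    by (subst fps_deriv_power) (simp add: mult_ac)
  have e: "U ^ (m - 1) * fps_deriv (fps_X * U) = U ^ m + fps_X * (U ^ (m - 1) * fps_deriv U)"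
    unfolding Um by (simp add: fps_deriv_mult algebra_simps)
  have mz: "(of_nat m :: 'a) \<noteq> 0" using m by simp
  show ?thesis
  proof (cases n)
    case 0
    then show ?thesis unfolding e using mz by simp
  next
    case (Suc k)
    have "(U ^ (m - 1) * fps_deriv U) $ k = (fps_deriv (U ^ m)) $ k / of_nat m"
      unfolding dUm using mz by simp
    also have "\<dots> = of_nat n * (U ^ m) $ n / of_nat m"
      unfolding fps_deriv_nth using Suc by simp
    finally have "(U ^ (m - 1) * fps_deriv (fps_X * U)) $ n = (U ^ m) $ n + of_nat n * (U ^ m) $ n / of_nat m"
      unfolding e using Suc by simp
    then show ?thesis using mz by (simp add: field_simps)
  qed
qed

lemma Pprod_nth:
  fixes a :: "nat \<Rightarrow> nat" and r :: nat
  shows "(\<Prod>k<r. Pb (a k)) $ p = (-1) ^ p *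
     (\<Sum>i\<in>{i \<in> {..<r} \<rightarrow>\<^sub>E {..p}. (\<Sum>k<r. i k) = p}.
          \<Prod>k<r. complex_of_real (bernoulli_num (i k)) / fact (i k) * of_nat (a k) ^ i k)"
  unfolding prod_nth_PiE sum_distrib_left
proof (intro sum.cong refl)
  fix i assume i: "i \<in> {i \<in> {..<r} \<rightarrow>\<^sub>E {..p}. (\<Sum>k<r. i k) = p}"
  have "(\<Prod>k<r. Pb (a k) $ i k) = (\<Prod>k<r. (-1) ^ i k * (complex_of_real (bernoulli_num (i k)) / fact (i k) * of_nat (a k) ^ i k))"
  proof (intro prod.cong refl)
    fix k
    have np: "(- (of_nat (a k) :: complex)) ^ i k = (-1) ^ i k * of_nat (a k) ^ i k"
      by (metis power_minus)
    show "Pb (a k) $ i k = (-1) ^ i k * (complex_of_real (bernoulli_num (i k)) / fact (i k) * of_nat (a k) ^ i k)"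
      unfolding Pb_def fps_nth_Abs_fps np by (simp only: mult_ac)
  qed
  also have "\<dots> = (\<Prod>k<r. (-1) ^ i k) * (\<Prod>k<r. complex_of_real (bernoulli_num (i k)) / fact (i k) * of_nat (a k) ^ i k)"
    by (rule prod.distrib)
  also have "(\<Prod>k<r. (-1::complex) ^ i k) = (-1) ^ p"
    using i by (simp add: power_sum[symmetric])
  finally show "(\<Prod>k<r. Pb (a k) $ i k) = (-1) ^ p * (\<Prod>k<r. complex_of_real (bernoulli_num (i k)) / fact (i k) * of_nat (a k) ^ i k)" .
qed

lemma alg_aux:
  fixes X Y F1 F2 St I s s1 s2 :: complex
  assumes "X \<noteq> 0" "Y \<noteq> 0" "F2 \<noteq> 0" "s1 * s2 = s"
  shows "s * F1 * (St / F2 * I) = (Y / X * (s1 * (X * F1) * St / (Y * F2))) * (s2 * I)"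
  using assms by (subst assms(4)[symmetric]) (simp add: field_simps)

lemma final_arith:
  fixes inner :: "nat \<Rightarrow> complex" and A :: complex
  assumes m: "1 \<le> m" "m \<le> r"
  shows "inverse A * (\<Sum>n=0..r-m. (of_nat (n+m) / of_nat m * ((-1)^(n+m+m) * fact m * of_nat (Stirling (n+m) m) / fact (n+m))) * ((-1)^(r-m-n) * inner (r-m-n)))
    = (-1)^(r-m) * fact (m-1) / A * (\<Sum>l=m..r. of_nat (Stirling l m) / fact (l-1) * inner (r-l))"
proof -
  have "(\<Sum>l=m..r. of_nat (Stirling l m) / fact (l-1) * inner (r-l)) = (\<Sum>n=0..r-m. of_nat (Stirling (n+m) m) / fact (n+m-1) * inner (r-m-n))"
    using sum.shift_bounds_cl_nat_ivl[of "\<lambda>l. of_nat (Stirling l m) / fact (l-1) * inner (r-l) :: complex" 0 m "r-m"] m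
    by (simp add: add.commute)
  then have "(-1)^(r-m) * fact (m-1) / A * (\<Sum>l=m..r. of_nat (Stirling l m) / fact (l-1) * inner (r-l))
     = inverse A * (\<Sum>n=0..r-m. (-1)^(r-m) * fact (m-1) * (of_nat (Stirling (n+m) m) / fact (n+m-1) * inner (r-m-n)))"
    by (simp add: sum_distrib_left divide_inverse mult_ac)
  also have "\<dots> = inverse A * (\<Sum>n=0..r-m. (of_nat (n+m) / of_nat m * ((-1)^(n+m+m) * fact m * of_nat (Stirling (n+m) m) / fact (n+m))) * ((-1)^(r-m-n) * inner (r-m-n)))"
  proof (intro arg_cong[where f="\<lambda>x. inverse A * x"] sum.cong refl)
    fix n assume n: "n \<in> {0..r-m}"
    have sg: "(-1::complex)^(n+m+m) * (-1)^(r-m-n) = (-1)^(r-m)"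
    proof -
      have "n+m+m + (r-m-n) = (r-m) + 2*m" using n m by auto
      then have "(-1::complex)^(n+m+m) * (-1)^(r-m-n) = (-1)^(r-m) * ((-1)^2)^m"
        by (metis power_add power_mult)
      then show ?thesis by simp
    qed
    have f1: "(fact m :: complex) = of_nat m * fact (m-1)" using m by (metis fact_reduce not_one_le_zero neq0_conv)
    have f2: "(fact (n+m) :: complex) = of_nat (n+m) * fact (n+m-1)" using m by (metis fact_reduce add_is_0 not_one_le_zero neq0_conv)
    have mz: "(of_nat m :: complex) \<noteq> 0" "(of_nat (n+m) :: complex) \<noteq> 0" using m
      by (simp, metis add_is_0 of_nat_eq_0_iff not_one_le_zero)
    have fz: "(fact (n+m-1) :: complex) \<noteq> 0" by simp
    show "(-1)^(r-m) * fact (m-1) * (of_nat (Stirling (n+m) m) / fact (n+m-1) * inner (r-m-n))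
      = (of_nat (n+m) / of_nat m * ((-1)^(n+m+m) * fact m * of_nat (Stirling (n+m) m) / fact (n+m))) * ((-1)^(r-m-n) * inner (r-m-n))"
      unfolding f1 f2 by (rule alg_aux) (use mz fz sg in auto)
  qed
  finally show ?thesis by simp
qed



definition Wf :: "complex fps" where "Wf = 1 - fps_exp (-1)"
definition Uf :: "complex fps" where "Uf = fps_shift 1 Wf"

lemma Wf0: "Wf $ 0 = 0" by (simp add: Wf_def)
lemma WfU: "Wf = fps_X * Uf"
  unfolding Uf_def by (rule fps_ext) (simp add: Wf0)
lemma Uf0: "Uf $ 0 = 1" by (simp add: Uf_def Wf_def)

definition Tf :: "nat \<Rightarrow> complex fps" where "Tf n = (\<Sum>s<n. fps_exp (-1) ^ s)"

lemma TW: "Tf n * Wf = 1 - fps_exp (- of_nat n)"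
proof -
  have "1 - fps_exp (-1::complex) ^ n = (1 - fps_exp (-1)) * Tf n"
    unfolding Tf_def by (rule one_diff_power_eq)
  then show ?thesis by (simp add: Wf_def fps_exp_power_mult mult.commute)
qed

lemma compE: "Efps r a oo Wf = (\<Prod>k<r. Tf (a k))"
proof -
  have h: "(1 - fps_X) oo Wf = fps_exp (-1)"
    by (simp add: fps_compose_sub_distrib Wf0) (simp add: Wf_def)
  have "(1 - fps_X) ^ s oo Wf = fps_exp (-1) ^ s" for s
    unfolding fps_compose_power[OF Wf0, symmetric] h ..
  then show ?thesis
    unfolding Efps_def Tf_def fps_compose_prod_distrib[OF Wf0] fps_compose_sum_distrib by simp
qed

lemma PTU: "Pb n * Tf n * Uf = fps_const (of_nat n)"
proof -
  have "fps_X * (Pb n * Tf n * Uf) = Pb n * (Tf n * Wf)" by (simp add: WfU mult_ac)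
  also have "\<dots> = fps_X * fps_const (of_nat n)" unfolding TW Pb_prop by (rule mult.commute)
  finally show ?thesis by simp
qed

lemma fps_const_prod': "(\<Prod>k<r. fps_const (f k)) = fps_const (\<Prod>k<(r::nat). f k :: complex)"
  by (induction r) simp_all

theorem proposition4p5:
  fixes r :: nat and a :: "nat \<Rightarrow> nat" and c :: "complex \<Rightarrow> nat \<Rightarrow> complex" and m :: nat
  assumes r: "r \<ge> 1"
    and apos: "\<forall>k<r. a k > 0"
    and pfd: "\<forall>z. poly (denom_poly r a) z \<noteq> 0 \<longrightarrow>
       1 / poly (denom_poly r a) z =
       (\<Sum>x\<in>{w. poly (denom_poly r a) w = 0}.
          \<Sum>l=1..order x (denom_poly r a). c x l / (x - z) ^ l)"
    and m: "1 \<le> m" "m \<le> r"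
  shows "c 1 m =
    (-1) ^ (r - m) * fact (m - 1) / (\<Prod>k<r. of_nat (a k)) *
    (\<Sum>l=m..r. of_nat (Stirling l m) / fact (l - 1) *
       (\<Sum>i\<in>{i \<in> {..<r} \<rightarrow>\<^sub>E {..r - l}. (\<Sum>k<r. i k) = r - l}.
          \<Prod>k<r. complex_of_real (bernoulli_num (i k)) / fact (i k) * of_nat (a k) ^ i k))"
proof -
  define inner where "inner p = (\<Sum>i\<in>{i \<in> {..<r} \<rightarrow>\<^sub>E {..p}. (\<Sum>k<r. i k) = p}.
          \<Prod>k<r. complex_of_real (bernoulli_num (i k)) / fact (i k) * of_nat (a k) ^ i k)" for p
  define A where "A = (\<Prod>k<r. of_nat (a k) :: complex)"
  define E where "E = Efps r a"
  define G where "G = inverse E"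
  define PP where "PP = (\<Prod>k<r. Pb (a k))"
  have Anz: "A \<noteq> 0" unfolding A_def using apos by auto
  have E0: "E $ 0 \<noteq> 0" unfolding E_def Efps0 using Anz A_def by simp
  obtain Rf where Rf: "1 = (\<Sum>l=1..r. fps_const (c 1 l) * (fps_X^(r-l) * E)) + fps_X^r * Rf"
    using partA_fps[OF r apos pfd] unfolding E_def by blast
  have c1: "c 1 m = G $ (r - m)"
    unfolding G_def using coeffG[where c="\<lambda>l. c 1 l", OF Rf E0 m] by simp
  have GE: "G * E = 1" unfolding G_def using E0 by (simp add: inverse_mult_eq_1)
  have GW: "(G oo Wf) * (\<Prod>k<r. Tf (a k)) = 1"
    using arg_cong[where f="\<lambda>x. x oo Wf", OF GE]
    unfolding fps_compose_mult_distrib[OF Wf0, symmetric] compE[symmetric] E_def by simp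
  have PT: "(\<Prod>k<r. Pb (a k) * Uf) * (\<Prod>k<r. Tf (a k)) = fps_const A"
  proof -
    have "(\<Prod>k<r. Pb (a k) * Uf) * (\<Prod>k<r. Tf (a k)) = (\<Prod>k<r. Pb (a k) * Tf (a k) * Uf)"
      by (simp add: prod.distrib[symmetric] mult_ac)
    also have "\<dots> = (\<Prod>k<r. fps_const (of_nat (a k)))" by (simp add: PTU)
    finally show ?thesis unfolding A_def fps_const_prod' .
  qed
  have GoW: "G oo Wf = fps_const (inverse A) * (PP * Uf ^ r)"
  proof -
    have "(G oo Wf) * fps_const A = (G oo Wf) * (\<Prod>k<r. Tf (a k)) * (\<Prod>k<r. Pb (a k) * Uf)"
      unfolding PT[symmetric] by (simp only: mult_ac)
    also have "\<dots> = PP * Uf ^ r" unfolding GW PP_def by (simp add: prod.distrib)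
    finally have "(G oo Wf) * fps_const A = PP * Uf ^ r" .
    then have "(G oo Wf) * (fps_const A * fps_const (inverse A)) = fps_const (inverse A) * (PP * Uf ^ r)"
      by (metis mult.assoc mult.commute)
    then show ?thesis using Anz by simp
  qed
  define V where "V = inverse Uf"
  have UV: "Uf * V = 1" unfolding V_def using Uf0 by (simp add: inverse_mult_eq_1')
  have UrV: "Uf ^ r * V ^ Suc (r - m) = Uf ^ (m - 1)"
  proof -
    have e: "(m - 1) + Suc (r - m) = r" using m by simp
    have "Uf ^ r = Uf ^ (m - 1) * Uf ^ Suc (r - m)" unfolding power_add[symmetric] e ..
    then have "Uf ^ r * V ^ Suc (r - m) = Uf ^ (m - 1) * (Uf * V) ^ Suc (r - m)"
      by (simp only: power_mult_distrib mult.assoc)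
    then show ?thesis using UV by simp
  qed
  have "G $ (r - m) = ((G oo Wf) * fps_deriv Wf * V ^ Suc (r - m)) $ (r - m)"
    unfolding V_def WfU by (rule resid) (simp add: Uf0)
  also have "(G oo Wf) * fps_deriv Wf * V ^ Suc (r - m) = fps_const (inverse A) * ((Uf ^ (m - 1) * fps_deriv Wf) * PP)"
    unfolding GoW UrV[symmetric] by (simp only: mult_ac)
  also have "(fps_const (inverse A) * ((Uf ^ (m - 1) * fps_deriv Wf) * PP)) $ (r - m)
     = inverse A * (\<Sum>n=0..r-m. (Uf ^ (m - 1) * fps_deriv Wf) $ n * PP $ (r - m - n))"
    by (simp only: fps_mult_left_const_nth fps_mult_nth[of "Uf ^ (m - 1) * fps_deriv Wf" PP])
  also have "\<dots> = inverse A * (\<Sum>n=0..r-m. (of_nat (n+m) / of_nat m * ((-1)^(n+m+m) * fact m * of_nat (Stirling (n+m) m) / fact (n+m))) * ((-1)^(r-m-n) * inner (r-m-n)))"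
  proof (intro arg_cong[where f="\<lambda>x. inverse A * x"] sum.cong refl)
    fix n
    have "(Uf ^ (m - 1) * fps_deriv Wf) $ n = of_nat (n + m) / of_nat m * (Uf ^ m) $ n"
      unfolding WfU by (rule UW_nth[OF m(1)])
    also have "(Uf ^ m) $ n = (Wf ^ m) $ (n + m)"
      unfolding WfU power_mult_distrib by (simp add: fps_X_power_mult_nth)
    also have "\<dots> = (-1)^(n+m+m) * fact m * of_nat (Stirling (n+m) m) / fact (n+m)"
      unfolding Wf_def by (rule Wpow_nth)
    finally have 1: "(Uf ^ (m - 1) * fps_deriv Wf) $ n = of_nat (n+m) / of_nat m * ((-1)^(n+m+m) * fact m * of_nat (Stirling (n+m) m) / fact (n+m))" .
    have 2: "PP $ (r - m - n) = (-1)^(r-m-n) * inner (r-m-n)"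
      unfolding PP_def inner_def by (rule Pprod_nth)
    show "(Uf ^ (m - 1) * fps_deriv Wf) $ n * PP $ (r - m - n) = (of_nat (n+m) / of_nat m * ((-1)^(n+m+m) * fact m * of_nat (Stirling (n+m) m) / fact (n+m))) * ((-1)^(r-m-n) * inner (r-m-n))"
      unfolding 1 2 ..
  qed
  also have "\<dots> = (-1)^(r-m) * fact (m-1) / A * (\<Sum>l=m..r. of_nat (Stirling l m) / fact (l-1) * inner (r-l))"
    by (rule final_arith[OF m])
  finally show ?thesis unfolding c1 A_def inner_def .
qed


end
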